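(* There is an orientation of $\mathbb{RP}^3$ such that for every edge-face $\sigma$ and every $\mathrm{PGL}(4)$-class $[\mathcal{F}]$ of tetrahedra of flags, the projective tetrahedron $\mathrm{T}_{\mathcal{F}}$ associated to the $\sigma$-standard representative $\mathcal{F}$ of $[\mathcal{F}]$ is positively oriented, i.e. the simplicial identification of the standard simplex with $\mathrm{T}_{\mathcal{F}}$ sending the $m$-th vertex to $V_m$ is orientation preserving.
   Context: A flag is $(V,\eta)$, $\eta$ a plane of $\mathbb{RP}^3$ through the point $V$; non-degenerate tuples satisfy $\eta_i(V_j)=0\iff i=j$. A tetrahedron of flags $\mathcal{F}=(V_m,\eta_m)_{m=1}^4$ is a non-degenerate ordered quadruple of flags with $V_m$ not coplanar such that there is a (necessarily unique) projective tetrahedron $\mathrm{T}_{\mathcal{F}}$ with vertices $V_1,\dots,V_4$ whose interior misses every $\eta_m$. Edge-faces $\sigma=(ij)k$ are even permutations $[ijkl]$ of $\{1,2,3,4\}$. With $t_\sigma=t_{ijk}$, $e_\sigma=e_{ij}$ the triple and edge ratios ($t_{ijk}=\frac{\bar\eta_i(\bar V_j)\bar\eta_j(\bar V_k)\bar\eta_k(\bar V_i)}{\bar\eta_i(\bar V_k)\bar\eta_j(\bar V_i)\bar\eta_k(\bar V_j)}$, $e_{ij}=\frac{\bar\eta_i(\bar V_k)\bar\eta_j(\bar V_l)}{\bar\eta_i(\bar V_l)\bar\eta_j(\bar V_k)}$), the $\sigma$-standard representative of $[\mathcal{F}]$ is the unique representative with $(V_i,\eta_i)=([e_1],[e_2^*])$,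 $(V_j,\eta_j)=([e_2],[e_1^*])$, $(V_k,\eta_k)=([e_1+e_2+e_3],[t_\sigma e_1^*+e_2^*-(t_\sigma+1)e_3^*])$, $V_l=[e_\sigma e_1+e_2+X_\sigma e_3-e_4]$, $\eta_l=[e_{il}e_{lj}e_1^*+e_2^*-\bar\mu e_3^*+\bar\mu(Y-X_\sigma)e_4^*]$, where $\mu_\sigma=e_{jk}e_{ki}-e_{jk}+1$, $\bar\mu=e_{il}e_{lj}-e_{il}+1$, $X_\sigma=\mu_\sigma t_\sigma e_\sigma/(t_\sigma+1)$, $Y=(t_{jil}+1)/(t_{jil}\bar\mu)$ (existence and uniqueness of this representative is known). *)

theory Defs
  imports "HOL-Analysis.Analysis"
begin

text \<open>
  Points of RP^3 and planes of RP^3 (= points of the dual space) are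
  represented by nonzero lifts in real^4; a plane eta is evaluated on a point V by the
  dot product  eta \<bullet> V  (so e_i^* is represented by axis i 1).  All notions below are
  invariant under rescaling of lifts.  A quadruple of flags is indexed by the type 4,
  whose elements are 1, 2, 3, 4.
\<close>

definition vec4 :: "real \<Rightarrow> real \<Rightarrow> real \<Rightarrow> real \<Rightarrow> real^4" where
  "vec4 a b c d = a *\<^sub>R axis 1 1 + b *\<^sub>R axis 2 1 + c *\<^sub>R axis 3 1 + d *\<^sub>R axis 4 1"

definition pt_eq :: "real^4 \<Rightarrow> real^4 \<Rightarrow> bool" where
  "pt_eq v w \<longleftrightarrow> (\<exists>c. c \<noteq> 0 \<and> v = c *\<^sub>R w)"

definition nondeg_flags :: "(4 \<Rightarrow> real^4) \<Rightarrow> (4 \<Rightarrow> real^4) \<Rightarrow> bool" where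
  "nondeg_flags V \<eta> \<longleftrightarrow> (\<forall>m. V m \<noteq> 0 \<and> \<eta> m \<noteq> 0) \<and> (\<forall>i j. \<eta> i \<bullet> V j = 0 \<longleftrightarrow> i = j)"

definition vert_matrix :: "(4 \<Rightarrow> real^4) \<Rightarrow> real^4^4" where
  "vert_matrix W = (\<chi> m. W m)"

text \<open>The projective tetrahedra with vertices [V_1],...,[V_4] (V_m not coplanar) are
  the images of the cones {sum_m a_m s_m V_m : a_m \<ge> 0} for sign choices s; the
  interior of such a tetrahedron is the image of the open cone (all a_m > 0).\<close>
definition tet_interior_cone :: "(4 \<Rightarrow> real^4) \<Rightarrow> (4 \<Rightarrow> real) \<Rightarrow> (real^4) set" where
  "tet_interior_cone V s = {x. \<exists>a. (\<forall>m. a m > 0) \<and> x = (\<Sum>m\<in>UNIV. a m *\<^sub>R (s m *\<^sub>R V m))}"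

text \<open>s describes a projective tetrahedron with vertices V_m whose interior misses
  every plane eta_n.\<close>
definition tet_signs :: "(4 \<Rightarrow> real^4) \<Rightarrow> (4 \<Rightarrow> real^4) \<Rightarrow> (4 \<Rightarrow> real) \<Rightarrow> bool" where
  "tet_signs V \<eta> s \<longleftrightarrow> (\<forall>m. s m = 1 \<or> s m = -1) \<and>
     (\<forall>n. \<forall>x\<in>tet_interior_cone V s. \<eta> n \<bullet> x \<noteq> 0)"

definition tetra_of_flags :: "(4 \<Rightarrow> real^4) \<Rightarrow> (4 \<Rightarrow> real^4) \<Rightarrow> bool" where
  "tetra_of_flags V \<eta> \<longleftrightarrow> nondeg_flags V \<eta> \<and> det (vert_matrix V) \<noteq> 0 \<and> (\<exists>s. tet_signs V \<eta> s)"

definition triple_ratio :: "(4 \<Rightarrow> real^4) \<Rightarrow> (4 \<Rightarrow> real^4) \<Rightarrow> 4 \<Rightarrow> 4 \<Rightarrow> 4 \<Rightarrow> real" where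
  "triple_ratio V \<eta> i j k =
     ((\<eta> i \<bullet> V j) * (\<eta> j \<bullet> V k) * (\<eta> k \<bullet> V i)) / ((\<eta> i \<bullet> V k) * (\<eta> j \<bullet> V i) * (\<eta> k \<bullet> V j))"

text \<open>e_{ij} where [i j k l] is an even permutation.\<close>
definition edge_ratio :: "(4 \<Rightarrow> real^4) \<Rightarrow> (4 \<Rightarrow> real^4) \<Rightarrow> 4 \<Rightarrow> 4 \<Rightarrow> 4 \<Rightarrow> 4 \<Rightarrow> real" where
  "edge_ratio V \<eta> i j k l = ((\<eta> i \<bullet> V k) * (\<eta> j \<bullet> V l)) / ((\<eta> i \<bullet> V l) * (\<eta> j \<bullet> V k))"

text \<open>The flag quadruple (V,eta) is the sigma-standard representative of its class,
  for the edge-face sigma = [i j k l] = [p 1, p 2, p 3, p 4] (p an even permutation).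
  Completions to even permutations used for the edge ratios:
  e_jk ~ [j k i l], e_ki ~ [k i j l], e_il ~ [i l j k], e_lj ~ [l j i k].\<close>
definition sigma_standard :: "(4 \<Rightarrow> 4) \<Rightarrow> (4 \<Rightarrow> real^4) \<Rightarrow> (4 \<Rightarrow> real^4) \<Rightarrow> bool" where
  "sigma_standard p V \<eta> \<longleftrightarrow>
     (let i = p 1; j = p 2; k = p 3; l = p 4;
          t = triple_ratio V \<eta> i j k;
          e = edge_ratio V \<eta> i j k l;
          e_jk = edge_ratio V \<eta> j k i l;
          e_ki = edge_ratio V \<eta> k i j l;
          e_il = edge_ratio V \<eta> i l j k;
          e_lj = edge_ratio V \<eta> l j i k;
          t_jil = triple_ratio V \<eta> j i l;
          \<mu> = e_jk * e_ki - e_jk + 1;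
          \<mu>b = e_il * e_lj - e_il + 1;
          X = \<mu> * t * e / (t + 1);
          Y = (t_jil + 1) / (t_jil * \<mu>b)
      in pt_eq (V i) (vec4 1 0 0 0) \<and> pt_eq (\<eta> i) (vec4 0 1 0 0) \<and>
         pt_eq (V j) (vec4 0 1 0 0) \<and> pt_eq (\<eta> j) (vec4 1 0 0 0) \<and>
         pt_eq (V k) (vec4 1 1 1 0) \<and> pt_eq (\<eta> k) (vec4 t 1 (-(t + 1)) 0) \<and>
         pt_eq (V l) (vec4 e 1 X (-1)) \<and>
         pt_eq (\<eta> l) (vec4 (e_il * e_lj) 1 (-\<mu>b) (\<mu>b * (Y - X))))"

text \<open>Orientations of RP^3 correspond to orientations of R^4, encoded by a sign \<epsilon>.
  The simplicial map from the standard simplex to the tetrahedron given by signs s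
  (vertex m to [V_m]) lifts to the linear map with rows s_m V_m; it is orientation
  preserving iff \<epsilon> times its determinant is positive.\<close>
definition positively_oriented :: "real \<Rightarrow> (4 \<Rightarrow> real^4) \<Rightarrow> (4 \<Rightarrow> real) \<Rightarrow> bool" where
  "positively_oriented \<epsilon> V s \<longleftrightarrow> \<epsilon> * det (vert_matrix (\<lambda>m. s m *\<^sub>R V m)) > 0"

end

theory Submission
  imports Defs
begin

lemma vec4_nth[simp]: "vec4 a b c d $ 1 = a" "vec4 a b c d $ 2 = b" "vec4 a b c d $ 3 = c" "vec4 a b c d $ 4 = d"
  by (simp_all add: vec4_def axis_def)

lemma vec4_inner[simp]: "vec4 a b c d \<bullet> vec4 a' b' c' d' = a*a' + b*b' + c*c' + d*d'"
  unfolding inner_vec_def sum_4 by simp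

lemma prod_4: "prod f (UNIV::4 set) = f 1 * f 2 * f 3 * f 4"
  unfolding UNIV_4 by (simp add: ac_simps)

lemma det_special:
  fixes A :: "real^4^4"
  assumes r: "A$1 = a *\<^sub>R vec4 1 0 0 0" "A$2 = b *\<^sub>R vec4 0 1 0 0"
     "A$3 = c *\<^sub>R vec4 1 1 1 0" "A$4 = d *\<^sub>R vec4 e 1 X (-1)"
  shows "det A = - (a*b*c*d)"
proof -
  let ?f = "\<lambda>p. of_int (sign p) * prod (\<lambda>i. A$i$p i) (UNIV :: 4 set)"
  let ?P = "{p. p permutes (UNIV :: 4 set)}"
  have idin: "id \<in> ?P" by (simp add: permutes_id)
  have fin: "finite ?P" by (simp add: finite_permutations)
  have z: "?f q = 0" if q: "q \<in> ?P - {id}" for q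
  proof -
    have perm: "q permutes UNIV" and nid: "q \<noteq> id" using q by auto
    have inj: "inj q" using perm permutes_inj by blast
    have "A$1$q 1 * A$2$q 2 * A$3$q 3 * A$4$q 4 = 0"
    proof (cases "q 1 = 1 \<and> q 2 = 2 \<and> q 3 = 3 \<and> q 4 = 4")
      case True
      have "q = id"
      proof (rule ext)
        fix x :: 4 show "q x = id x" using True exhaust_4[of x] by auto
      qed
      with nid show ?thesis by simp
    next
      case False
      have d: "q 3 \<noteq> q 1" "q 3 \<noteq> q 2" "q 4 \<noteq> q 3" "q 4 \<noteq> q 1" "q 4 \<noteq> q 2"
        using inj by (simp_all add: inj_eq)
      show ?thesis
      proof (cases "q 1 = 1")
        case False
        then have "A$1$q 1 = 0" using r(1) exhaust_4[of "q 1"] by auto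
        then show ?thesis by simp
      next
        case q1: True
        show ?thesis
        proof (cases "q 2 = 2")
          case False
          then have "A$2$q 2 = 0" using r(2) exhaust_4[of "q 2"] by auto
          then show ?thesis by simp
        next
          case q2: True
          show ?thesis
          proof (cases "q 3 = 3")
            case False
            then have "q 3 = 4" using d q1 q2 exhaust_4[of "q 3"] by auto
            then have "A$3$q 3 = 0" using r(3) by simp
            then show ?thesis by simp
          next
            case q3: True
            then have "q 4 = 4" using d q1 q2 exhaust_4[of "q 4"] by auto
            then show ?thesis using q1 q2 q3 \<open>\<not> (q 1 = 1 \<and> q 2 = 2 \<and> q 3 = 3 \<and> q 4 = 4)\<close> by simp
          qed
        qed
      qed
    qed
    then show ?thesis by (simp add: prod_4)
  qed
  have "det A = ?f id + sum ?f (?P - {id})"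
    unfolding det_def using sum.remove[OF fin idin, of ?f] by simp
  also have "sum ?f (?P - {id}) = 0" using z by (intro sum.neutral) blast
  also have "?f id = - (a*b*c*d)" by (simp add: prod_4 r sign_id)
  finally show ?thesis by simp
qed


lemma zero_comb:
  fixes x :: "4 \<Rightarrow> real"
  assumes "a \<noteq> b" "x a > 0" "x b < 0"
  shows "\<exists>w. (\<forall>m. w m > 0) \<and> (\<Sum>m\<in>UNIV. w m * x m) = 0"
proof -
  define S where "S = (\<Sum>m\<in>UNIV-{a,b}. x m)"
  have split: "(\<Sum>m\<in>UNIV. f m) = f a + f b + (\<Sum>m\<in>UNIV-{a,b}. f m)" for f :: "4 \<Rightarrow> real"
  proof -
    have "(\<Sum>m\<in>UNIV. f m) = f a + (\<Sum>m\<in>UNIV-{a}. f m)"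
      by (rule sum.remove) simp_all
    also have "(\<Sum>m\<in>UNIV-{a}. f m) = f b + (\<Sum>m\<in>UNIV-{a}-{b}. f m)"
      by (rule sum.remove) (use assms(1) in simp_all)
    also have "UNIV-{a}-{b} = UNIV-{a,b}" by blast
    finally show ?thesis by (simp only: add.assoc)
  qed
  define A B where "A = (if S \<ge> 0 then 1 else (- x b - S) / x a)"
    and "B = (if S \<ge> 0 then (x a + S) / (- x b) else 1)"
  define w where "w = (\<lambda>m. if m = a then A else if m = b then B else (1::real))"
  have "A > 0" using assms by (auto simp: A_def intro!: divide_pos_pos)
  have "B > 0"
  proof (cases "S \<ge> 0")
    case True
    have "x a + S > 0" using True assms by linarith
    moreover have "- x b > 0" using assms by linarith
    ultimately have "(x a + S) / (- x b) > 0" by (rule divide_pos_pos)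
    then show ?thesis using True unfolding B_def by simp
  qed (simp add: B_def)
  with \<open>A > 0\<close> have pos: "\<forall>m. w m > 0" by (auto simp: w_def)
  have "(\<Sum>m\<in>UNIV-{a,b}. w m * x m) = S" unfolding S_def by (rule sum.cong) (auto simp: w_def)
  moreover have "A * x a + B * x b + S = 0" using assms by (auto simp: A_def B_def field_simps)
  ultimately have "(\<Sum>m\<in>UNIV. w m * x m) = 0" using assms(1) by (subst split) (simp add: w_def)
  with pos show ?thesis by blast
qed

lemma tet_no_opp:
  assumes "tet_signs V \<eta> s" "a \<noteq> b"
  shows "\<not> (s a * (\<eta> n \<bullet> V a) > 0 \<and> s b * (\<eta> n \<bullet> V b) < 0)"
proof
  assume h: "s a * (\<eta> n \<bullet> V a) > 0 \<and> s b * (\<eta> n \<bullet> V b) < 0"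
  obtain w where w: "\<forall>m. w m > 0" "(\<Sum>m\<in>UNIV. w m * (s m * (\<eta> n \<bullet> V m))) = 0"
    using zero_comb[of a b "\<lambda>m. s m * (\<eta> n \<bullet> V m)"] h assms(2) by auto
  let ?y = "(\<Sum>m\<in>UNIV. w m *\<^sub>R (s m *\<^sub>R V m))"
  have "?y \<in> tet_interior_cone V s" unfolding tet_interior_cone_def using w(1) by blast
  hence "\<eta> n \<bullet> ?y \<noteq> 0" using assms(1) unfolding tet_signs_def by blast
  moreover have "\<eta> n \<bullet> ?y = (\<Sum>m\<in>UNIV. w m * (s m * (\<eta> n \<bullet> V m)))"
    by (simp add: inner_sum_right mult.assoc)
  ultimately show False using w(2) by simp
qed

lemma sign_core:
  fixes a b :: real
  assumes "\<not> (a > 0 \<and> b < 0)" "\<not> (b > 0 \<and> a < 0)" "a \<noteq> 0" "b \<noteq> 0"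
  shows "a * b > 0"
proof (cases "a > 0")
  case True
  then have "b > 0" using assms by linarith
  with True show ?thesis by simp
next
  case False
  then have "a < 0" using assms by linarith
  then have "b < 0" using assms by linarith
  with \<open>a < 0\<close> show ?thesis by (simp add: mult_neg_neg)
qed

lemma same_sign:
  fixes d a b :: real
  assumes "\<not> (d*a > 0 \<and> d*b < 0)" "\<not> (d*b > 0 \<and> d*a < 0)" "d \<noteq> 0" "a \<noteq> 0" "b \<noteq> 0"
  shows "a * b > 0"
proof -
  have "(d*a) * (d*b) > 0"
    by (rule sign_core[OF assms(1,2)]) (use assms(3-5) in simp_all)
  also have "(d*a) * (d*b) = (a*b) * (d*d)" by algebra
  finally have h: "0 < (a*b) * (d*d)" .
  have "d*d > 0" using assms(3) by (metis not_real_square_gt_zero)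
  with h show ?thesis by (metis zero_less_mult_pos2 mult.commute)
qed

lemma prod4_neg:
  fixes a b c d :: real
  assumes "a*c > 0" "b*c > 0" "d*c > 0"
  shows "a*b*c*d > 0"
proof -
  have "0 < (a*c)*(b*c)*(d*c)" by (intro mult_pos_pos assms)
  also have "(a*c)*(b*c)*(d*c) = (a*b*c*d)*(c*c)" by algebra
  finally have h: "0 < (a*b*c*d)*(c*c)" .
  have "c \<noteq> 0" using assms(1) by (metis mult_zero_right less_irrefl)
  then have "c*c > 0" by (metis not_real_square_gt_zero)
  with h show ?thesis by (metis zero_less_mult_pos2 mult.commute)
qed

theorem lemma2p7:
  shows "\<exists>\<epsilon>::real. (\<epsilon> = 1 \<or> \<epsilon> = -1) \<and>
    (\<forall>(p::4 \<Rightarrow> 4) (V::4 \<Rightarrow> real^4) (\<eta>::4 \<Rightarrow> real^4) (s::4 \<Rightarrow> real).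
       p permutes UNIV \<and> evenperm p \<and> tetra_of_flags V \<eta> \<and> sigma_standard p V \<eta> \<and>
       tet_signs V \<eta> s \<longrightarrow> positively_oriented \<epsilon> V s)"
proof (intro exI[of _ "-1"] conjI allI impI)
  fix p :: "4 \<Rightarrow> 4" and V \<eta> :: "4 \<Rightarrow> real^4" and s :: "4 \<Rightarrow> real"
  assume H: "p permutes UNIV \<and> evenperm p \<and> tetra_of_flags V \<eta> \<and> sigma_standard p V \<eta> \<and> tet_signs V \<eta> s"
  define i j k l where "i = p 1" "j = p 2" "k = p 3" "l = p 4"
  have perm: "p permutes UNIV" and ev: "evenperm p" and ts: "tet_signs V \<eta> s" using H by blast+
  have inj: "inj p" using perm permutes_inj by blast
  have dist: "i \<noteq> j" "i \<noteq> k" "i \<noteq> l" "j \<noteq> k" "j \<noteq> l" "k \<noteq> l" "k \<noteq> i" "l \<noteq> i" "l \<noteq> j" "k \<noteq> j" "l \<noteq> k"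
    unfolding i_j_k_l_def using inj by (simp_all add: inj_eq)
  have snz: "s m \<noteq> 0" for m
  proof -
    have "s m = 1 \<or> s m = -1" using ts unfolding tet_signs_def by blast
    then show ?thesis by auto
  qed
  have ss: "sigma_standard p V \<eta>" using H by blast
  then have pe: "pt_eq (V i) (vec4 1 0 0 0)" "pt_eq (\<eta> i) (vec4 0 1 0 0)"
     "pt_eq (V j) (vec4 0 1 0 0)" "pt_eq (\<eta> j) (vec4 1 0 0 0)" "pt_eq (V k) (vec4 1 1 1 0)"
     "\<exists>e X. pt_eq (V l) (vec4 e 1 X (-1))"
    unfolding sigma_standard_def Let_def i_j_k_l_def by blast+
  obtain ci where ci: "ci \<noteq> 0" "V i = ci *\<^sub>R vec4 1 0 0 0" using pe(1) unfolding pt_eq_def by blast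
  obtain di where di: "di \<noteq> 0" "\<eta> i = di *\<^sub>R vec4 0 1 0 0" using pe(2) unfolding pt_eq_def by blast
  obtain cj where cj: "cj \<noteq> 0" "V j = cj *\<^sub>R vec4 0 1 0 0" using pe(3) unfolding pt_eq_def by blast
  obtain dj where dj: "dj \<noteq> 0" "\<eta> j = dj *\<^sub>R vec4 1 0 0 0" using pe(4) unfolding pt_eq_def by blast
  obtain ck where ck: "ck \<noteq> 0" "V k = ck *\<^sub>R vec4 1 1 1 0" using pe(5) unfolding pt_eq_def by blast
  obtain cl e X where cl: "cl \<noteq> 0" "V l = cl *\<^sub>R vec4 e 1 X (-1)" using pe(6) unfolding pt_eq_def by blast
  have v1: "\<eta> i \<bullet> V j = di * cj" "\<eta> i \<bullet> V k = di * ck" "\<eta> i \<bullet> V l = di * cl"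
    "\<eta> j \<bullet> V i = dj * ci" "\<eta> j \<bullet> V k = dj * ck"
    by (simp_all add: di cj ck cl dj ci)
  have o1: "\<not> (di * (s j * cj) > 0 \<and> di * (s k * ck) < 0)" "\<not> (di * (s k * ck) > 0 \<and> di * (s j * cj) < 0)"
    "\<not> (di * (s l * cl) > 0 \<and> di * (s k * ck) < 0)" "\<not> (di * (s k * ck) > 0 \<and> di * (s l * cl) < 0)"
    "\<not> (dj * (s i * ci) > 0 \<and> dj * (s k * ck) < 0)" "\<not> (dj * (s k * ck) > 0 \<and> dj * (s i * ci) < 0)"
    using tet_no_opp[OF ts dist(4), of i] tet_no_opp[OF ts dist(10), of i]
      tet_no_opp[OF ts dist(11), of i] tet_no_opp[OF ts dist(6), of i]
      tet_no_opp[OF ts dist(2), of j] tet_no_opp[OF ts dist(7), of j]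
    unfolding v1 by (simp_all add: mult_ac)
  have jk: "(s j * cj) * (s k * ck) > 0"
    by (rule same_sign[OF o1(1) o1(2)]) (simp_all add: di cj ck snz)
  have lk: "(s l * cl) * (s k * ck) > 0"
    by (rule same_sign[OF o1(3) o1(4)]) (simp_all add: di cl ck snz)
  have ik: "(s i * ci) * (s k * ck) > 0"
    by (rule same_sign[OF o1(5) o1(6)]) (simp_all add: dj ci ck snz)
  define M where "M = vert_matrix (\<lambda>m. s m *\<^sub>R V m)"
  define N where "N = (\<chi> r. M $ p r)"
  have "det N = of_int (sign p) * det M" unfolding N_def by (rule det_permute_rows[OF perm])
  hence dNM: "det N = det M" using ev by (simp add: sign_def)
  have Nrow: "N $ r = s (p r) *\<^sub>R V (p r)" for r unfolding N_def M_def vert_matrix_def by simp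
  have r1: "N$1 = (s i * ci) *\<^sub>R vec4 1 0 0 0" proof -
    have "N$1 = s i *\<^sub>R V i" unfolding Nrow i_j_k_l_def ..
    then show ?thesis unfolding ci(2) scaleR_scaleR .
  qed
  have r2: "N$2 = (s j * cj) *\<^sub>R vec4 0 1 0 0" proof -
    have "N$2 = s j *\<^sub>R V j" unfolding Nrow i_j_k_l_def ..
    then show ?thesis unfolding cj(2) scaleR_scaleR .
  qed
  have r3: "N$3 = (s k * ck) *\<^sub>R vec4 1 1 1 0" proof -
    have "N$3 = s k *\<^sub>R V k" unfolding Nrow i_j_k_l_def ..
    then show ?thesis unfolding ck(2) scaleR_scaleR .
  qed
  have r4: "N$4 = (s l * cl) *\<^sub>R vec4 e 1 X (-1)" proof -
    have "N$4 = s l *\<^sub>R V l" unfolding Nrow i_j_k_l_def ..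
    then show ?thesis unfolding cl(2) scaleR_scaleR .
  qed
  have dN: "det N = - ((s i * ci) * (s j * cj) * (s k * ck) * (s l * cl))"
    by (rule det_special[OF r1 r2 r3 r4])
  have "det M < 0" using dNM dN prod4_neg[OF ik jk lk] by linarith
  then show "positively_oriented (-1) V s" unfolding positively_oriented_def M_def by linarith
qed simp

end
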